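(* Let $(X,\rho)$ be a metric space, $A\in CL(X)$ and $(A_k)\subset CL(X)$. Suppose that $f\colon[0,\infty)\to[0,\infty)$ is an unbounded modulus such that $\lim_{t\to\infty}\frac{f(t)}{t}>0$ and there is $c\in(0,\infty)$ with $f(xy)\ge c\,f(x)\,f(y)$ for all $x,y\in[0,\infty)$. Then: (i) if $(A_k)$ is Wijsman strongly Cesàro summable to $A$ with respect to $f$, then $(A_k)$ is $f$-Wijsman statistically convergent to $A$; (ii) if $(A_k)$ is Wijsman bounded and $f$-Wijsman statistically convergent to $A$, then $(A_k)$ is Wijsman strongly Cesàro summable to $A$ with respect to $f$.
   Context: A modulus is a function $f\colon[0,\infty)\to[0,\infty)$ such that $f(x)=0$ iff $x=0$, $f$ is subadditive, increasing and continuous. $CL(X)$ denotes the set of all non-empty closed subsets of $(X,\rho)$, and $d(x,B)=\inf_{y\in B}\rho(x,y)$. $(A_k)$ is Wijsman bounded if $\sup_k d(x,A_k)<\infty$ for each $x\in X$. For an unbounded modulus $f$ and $K\subseteq\mathbb N$, the $f$-density is $d^f(K)=\lim_{n\to\infty}\frac{f(|\{k\le n:k\in K\}|)}{f(n)}$ (when the limit exists). $(A_k)$ is $f$-Wijsman statistically convergent to $A$ if for every $x\in X$ and every $\varepsilon>0$ the set $\{k:|d(x,A_k)-d(x,A)|\ge\varepsilon\}$ has $f$-density $0$. $(A_k)$ is Wijsman strongly Cesàro summable to $A$ with respect to $f$ if $\lim_{n\to\infty}\frac1n\sum_{k=1}^n f(|d(x,A_k)-d(x,A)|)=0$ for every $x\in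 X$. *)

theory Defs
  imports "HOL-Analysis.Analysis"
begin

definition modulus :: "(real \<Rightarrow> real) \<Rightarrow> bool" where
  "modulus f \<longleftrightarrow>
     (\<forall>x\<ge>0. f x \<ge> 0) \<and>
     (\<forall>x\<ge>0. f x = 0 \<longleftrightarrow> x = 0) \<and>
     (\<forall>x\<ge>0. \<forall>y\<ge>0. f (x + y) \<le> f x + f y) \<and>
     (\<forall>x\<ge>0. \<forall>y\<ge>x. f x \<le> f y) \<and>
     continuous_on {0..} f"

definition unbounded_modulus :: "(real \<Rightarrow> real) \<Rightarrow> bool" where
  "unbounded_modulus f \<longleftrightarrow> modulus f \<and> \<not> bdd_above (f ` {0..})"

definition CL :: "'a::metric_space set set" where
  "CL = {B. B \<noteq> {} \<and> closed B}"

definition f_density_zero :: "(real \<Rightarrow> real) \<Rightarrow> nat set \<Rightarrow> bool" where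
  "f_density_zero f K \<longleftrightarrow>
     ((\<lambda>n. f (real (card {k \<in> {1..n}. k \<in> K})) / f (real n)) \<longlonglongrightarrow> 0)"

definition wijsman_bounded :: "(nat \<Rightarrow> 'a::metric_space set) \<Rightarrow> bool" where
  "wijsman_bounded As \<longleftrightarrow> (\<forall>x. bdd_above (range (\<lambda>k. infdist x (As k))))"

definition f_wijsman_statistically_convergent ::
    "(real \<Rightarrow> real) \<Rightarrow> (nat \<Rightarrow> 'a::metric_space set) \<Rightarrow> 'a set \<Rightarrow> bool" where
  "f_wijsman_statistically_convergent f As A \<longleftrightarrow>
     (\<forall>x. \<forall>\<epsilon>>0. f_density_zero f {k. \<bar>infdist x (As k) - infdist x A\<bar> \<ge> \<epsilon>})"

definition wijsman_strongly_cesaro_summable ::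
    "(real \<Rightarrow> real) \<Rightarrow> (nat \<Rightarrow> 'a::metric_space set) \<Rightarrow> 'a set \<Rightarrow> bool" where
  "wijsman_strongly_cesaro_summable f As A \<longleftrightarrow>
     (\<forall>x. (\<lambda>n. (\<Sum>k=1..n. f \<bar>infdist x (As k) - infdist x A\<bar>) / real n) \<longlonglongrightarrow> 0)"

end

theory Submission
  imports Defs
begin

lemma mod_upper:
  assumes "modulus f"
  shows "f (real m) \<le> real m * f 1"
proof (induction m)
  case 0
  then show ?case using assms unfolding modulus_def by auto
next
  case (Suc m)
  have "f (real m + 1) \<le> f (real m) + f 1" using assms unfolding modulus_def by auto
  then show ?case using Suc by (simp add: algebra_simps)
qed

lemma mod_f1_pos:
  assumes "modulus f"
  shows "f 1 > 0"
proof -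
  have "f 1 \<ge> 0" "f 1 \<noteq> 0" using assms unfolding modulus_def by auto
  then show ?thesis by linarith
qed

lemma mod_mono:
  assumes "modulus f" "0 \<le> x" "x \<le> y"
  shows "f x \<le> f y"
  using assms unfolding modulus_def by auto

lemma mod_lower:
  assumes "modulus f" "L > 0" "((\<lambda>t. f t / t) \<longlongrightarrow> L) at_top"
  shows "\<exists>\<delta>>0. \<forall>m::nat. f (real m) \<ge> \<delta> * real m"
proof -
  have "eventually (\<lambda>t. f t / t > L/2) at_top"
    using order_tendstoD(1)[OF assms(3), of "L/2"] assms(2) by simp
  then obtain T0 where T0: "\<And>t. t \<ge> T0 \<Longrightarrow> f t / t > L/2"
    by (auto simp: eventually_at_top_linorder)
  define T where "T = max T0 1"
  have T: "\<And>t. t \<ge> T \<Longrightarrow> f t / t > L/2" "T \<ge> 1" using T0 unfolding T_def by auto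
  have f1: "f 1 > 0" using mod_f1_pos[OF assms(1)] .
  define \<delta> where "\<delta> = min (L/2) (f 1 / T)"
  have dpos: "\<delta> > 0" using f1 T(2) assms(2) unfolding \<delta>_def by auto
  have "f (real m) \<ge> \<delta> * real m" for m :: nat
  proof (cases "m = 0")
    case True
    then show ?thesis using assms(1) unfolding modulus_def by auto
  next
    case False
    then have m1: "real m \<ge> 1" by simp
    show ?thesis
    proof (cases "real m \<ge> T")
      case True
      then have "f (real m) / real m > L/2" using T by auto
      then have "f (real m) > L/2 * real m" using m1 by (simp add: field_simps)
      moreover have "\<delta> * real m \<le> L/2 * real m" using min.cobounded1[of "L/2" "f 1 / T"] unfolding \<delta>_def using m1
        by (intro mult_right_mono) auto
      ultimately show ?thesis by linarith
    next
      case False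
      have "f (real m) \<ge> f 1" using mod_mono[OF assms(1)] m1 by auto
      moreover have "\<delta> * real m \<le> (f 1 / T) * T" unfolding \<delta>_def using m1 False T(2) f1
        by (intro mult_mono) auto
      moreover have "(f 1 / T) * T = f 1" using T(2) by simp
      ultimately show ?thesis by linarith
    qed
  qed
  then show ?thesis using dpos by blast
qed

lemma part1:
  fixes a :: "nat \<Rightarrow> real"
  assumes mf: "modulus f" and dpos: "\<delta> > 0" and lowb: "\<forall>m::nat. f (real m) \<ge> \<delta> * real m"
    and S: "(\<lambda>n. (\<Sum>k=1..n. f (a k)) / real n) \<longlonglongrightarrow> 0"
    and nn: "\<forall>k. a k \<ge> 0" and ep: "\<epsilon> > 0"
  shows "(\<lambda>n. f (real (card {k \<in> {1..n}. k \<in> {k. a k \<ge> \<epsilon>}})) / f (real n)) \<longlonglongrightarrow> 0"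
proof -
  define C where "C n = card {k \<in> {1..n}. k \<in> {k. a k \<ge> \<epsilon>}}" for n
  have fe: "f \<epsilon> > 0" using mf ep unfolding modulus_def
    by (metis less_eq_real_def order.strict_iff_not)
  have f1: "f 1 > 0" using mod_f1_pos[OF mf] .
  have lim: "(\<lambda>n. (f 1 / \<delta>) * (((\<Sum>k=1..n. f (a k)) / real n) / f \<epsilon>)) \<longlonglongrightarrow> 0"
    using tendsto_mult_left_zero[OF tendsto_divide_zero[OF S, of "f \<epsilon>"], of "f 1 / \<delta>"] by (simp add: ac_simps)
  show ?thesis unfolding C_def[symmetric]
  proof (rule tendsto_sandwich[OF _ _ tendsto_const lim])
    show "eventually (\<lambda>n. 0 \<le> f (real (C n)) / f (real n)) sequentially"
      using mf unfolding modulus_def by (auto intro!: divide_nonneg_nonneg)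
    show "eventually (\<lambda>n. f (real (C n)) / f (real n) \<le>
        (f 1 / \<delta>) * (((\<Sum>k=1..n. f (a k)) / real n) / f \<epsilon>)) sequentially"
      unfolding eventually_sequentially
    proof (intro exI allI impI)
      fix n :: nat assume n: "n \<ge> 1"
      have fn: "f (real n) \<ge> \<delta> * real n" using lowb by auto
      have dn: "\<delta> * real n > 0" using dpos n by simp
      have "real (C n) * f \<epsilon> = (\<Sum>k\<in>{k \<in> {1..n}. k \<in> {k. a k \<ge> \<epsilon>}}. f \<epsilon>)"
        unfolding C_def by simp
      also have "\<dots> \<le> (\<Sum>k\<in>{k \<in> {1..n}. k \<in> {k. a k \<ge> \<epsilon>}}. f (a k))"
        by (intro sum_mono mod_mono[OF mf]) (use ep in auto)
      also have "\<dots> \<le> (\<Sum>k=1..n. f (a k))"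
        by (intro sum_mono2) (use mf nn in \<open>auto simp: modulus_def\<close>)
      finally have CS: "real (C n) * f \<epsilon> \<le> (\<Sum>k=1..n. f (a k))" .
      have "f (real (C n)) / f (real n) \<le> real (C n) * f 1 / (\<delta> * real n)"
        using mod_upper[OF mf, of "C n"] fn dn mf
        by (intro frac_le) (auto simp: modulus_def)
      also have "\<dots> = (f 1 / \<delta>) * ((real (C n) * f \<epsilon> / real n) / f \<epsilon>)"
        using fe dpos n by (simp add: field_simps)
      also have "\<dots> \<le> (f 1 / \<delta>) * (((\<Sum>k=1..n. f (a k)) / real n) / f \<epsilon>)"
        using CS f1 dpos fe n
        by (intro mult_left_mono divide_right_mono) auto
      finally show "f (real (C n)) / f (real n) \<le>
        (f 1 / \<delta>) * (((\<Sum>k=1..n. f (a k)) / real n) / f \<epsilon>)" .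
    qed
  qed
qed


lemma part2:
  fixes a :: "nat \<Rightarrow> real"
  assumes mf: "modulus f" and dpos: "\<delta> > 0" and lowb: "\<forall>m::nat. f (real m) \<ge> \<delta> * real m"
    and D: "\<forall>\<epsilon>>0. (\<lambda>n. f (real (card {k \<in> {1..n}. k \<in> {k. a k \<ge> \<epsilon>}})) / f (real n)) \<longlonglongrightarrow> 0"
    and nn: "\<forall>k. a k \<ge> 0" and M: "\<forall>k. a k \<le> M"
  shows "(\<lambda>n. (\<Sum>k=1..n. f (a k)) / real n) \<longlonglongrightarrow> 0"
proof (rule LIMSEQ_I)
  fix e :: real assume e: "e > 0"
  have f1: "f 1 > 0" using mod_f1_pos[OF mf] .
  have M0: "M \<ge> 0" using nn M by (meson order_trans)
  have fM: "f M \<ge> 0" using mf M0 unfolding modulus_def by auto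
  have f0: "f 0 = 0" using mf unfolding modulus_def by auto
  have cont: "continuous_on {0..} f" using mf unfolding modulus_def by auto
  obtain d where d: "d > 0" "\<And>t. t \<in> {0..} \<Longrightarrow> dist t 0 < d \<Longrightarrow> dist (f t) (f 0) < e/2"
    using cont e unfolding continuous_on_iff by (metis atLeast_iff half_gt_zero order_refl)
  define \<epsilon> where "\<epsilon> = d/2"
  have ep: "\<epsilon> > 0" using d unfolding \<epsilon>_def by simp
  have fe: "f \<epsilon> < e/2" using d(2)[of \<epsilon>] ep f0 unfolding \<epsilon>_def by auto
  have fe0: "f \<epsilon> \<ge> 0" using mf ep unfolding modulus_def by auto
  define C where "C n = card {k \<in> {1..n}. k \<in> {k. a k \<ge> \<epsilon>}}" for n
  have DC: "(\<lambda>n. f (real (C n)) / f (real n)) \<longlonglongrightarrow> 0" using D ep unfolding C_def by auto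
  have limC: "(\<lambda>n. real (C n) / real n) \<longlonglongrightarrow> 0"
  proof (rule tendsto_sandwich[OF _ _ tendsto_const tendsto_mult_left_zero[OF DC, of "f 1 / \<delta>"]])
    show "eventually (\<lambda>n. 0 \<le> real (C n) / real n) sequentially" by auto
    show "eventually (\<lambda>n. real (C n) / real n \<le> f (real (C n)) / f (real n) * (f 1 / \<delta>)) sequentially"
      unfolding eventually_sequentially
    proof (intro exI allI impI)
      fix n :: nat assume n: "n \<ge> 1"
      have fn: "f (real n) \<ge> \<delta> * real n" using lowb by auto
      have fnpos: "f (real n) > 0" using fn dpos n
        by (smt (verit, best) of_nat_0_less_iff less_le_trans mult_pos_pos zero_less_one le_simps(3))
      have fnu: "f (real n) \<le> real n * f 1" using mod_upper[OF mf] .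
      have fc: "f (real (C n)) \<ge> \<delta> * real (C n)" using lowb by auto
      have "real (C n) / real n = (\<delta> * real (C n)) / (\<delta> * real n)" using dpos by simp
      also have "\<dots> \<le> f (real (C n)) / (\<delta> * (f (real n) / f 1))"
        using fc fnu f1 fnpos dpos n mf
        by (intro frac_le) (auto simp: field_simps modulus_def)
      also have "\<dots> = f (real (C n)) / f (real n) * (f 1 / \<delta>)" using dpos f1 by simp
      finally show "real (C n) / real n \<le> f (real (C n)) / f (real n) * (f 1 / \<delta>)" .
    qed
  qed
  have "eventually (\<lambda>n. real (C n) / real n * f M < e/2) sequentially"
    using order_tendstoD(2)[OF tendsto_mult_left_zero[OF limC, of "f M"], of "e/2"] e by simp
  then obtain N where N: "\<And>n. n \<ge> N \<Longrightarrow> real (C n) / real n * f M < e/2"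
    by (auto simp: eventually_sequentially)
  show "\<exists>N. \<forall>n\<ge>N. norm ((\<Sum>k=1..n. f (a k)) / real n - 0) < e"
  proof (intro exI allI impI)
    fix n assume n: "n \<ge> max N 1"
    have bnd: "f (a k) \<le> f \<epsilon> + (if a k \<ge> \<epsilon> then f M else 0)" for k
      using mod_mono[OF mf, of "a k" M] mod_mono[OF mf, of "a k" \<epsilon>] nn M fe0 fM by auto
    have S0: "0 \<le> (\<Sum>k=1..n. f (a k))" using mf nn by (intro sum_nonneg) (auto simp: modulus_def)
    have "(\<Sum>k=1..n. f (a k)) \<le> (\<Sum>k=1..n. f \<epsilon> + (if a k \<ge> \<epsilon> then f M else 0))"
      by (intro sum_mono bnd)
    also have "\<dots> = real n * f \<epsilon> + (\<Sum>k=1..n. (if a k \<ge> \<epsilon> then f M else 0))"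
      by (simp add: sum.distrib)
    also have "(\<Sum>k=1..n. (if a k \<ge> \<epsilon> then f M else 0)) = real (C n) * f M"
      unfolding C_def by (simp add: sum.If_cases Int_def)
    finally have "(\<Sum>k=1..n. f (a k)) \<le> real n * f \<epsilon> + real (C n) * f M" .
    then have "(\<Sum>k=1..n. f (a k)) / real n \<le> f \<epsilon> + real (C n) / real n * f M"
      using n by (simp add: field_simps)
    also have "\<dots> < e" using fe N[of n] n by linarith
    finally show "norm ((\<Sum>k=1..n. f (a k)) / real n - 0) < e" using S0 by simp
  qed
qed

theorem theorem4p7:
  fixes f :: "real \<Rightarrow> real"
    and A :: "'a::metric_space set"
    and As :: "nat \<Rightarrow> 'a set"
  assumes "A \<in> CL"
    and "\<forall>k. As k \<in> CL"
    and "unbounded_modulus f"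
    and "\<exists>L>0. ((\<lambda>t. f t / t) \<longlongrightarrow> L) at_top"
    and "\<exists>c>0. \<forall>x\<ge>0. \<forall>y\<ge>0. f (x * y) \<ge> c * f x * f y"
  shows "(wijsman_strongly_cesaro_summable f As A \<longrightarrow> f_wijsman_statistically_convergent f As A)
       \<and> (wijsman_bounded As \<and> f_wijsman_statistically_convergent f As A
            \<longrightarrow> wijsman_strongly_cesaro_summable f As A)"
proof -
  have mf: "modulus f" using assms(3) unfolding unbounded_modulus_def by auto
  obtain L where L: "L > 0" "((\<lambda>t. f t / t) \<longlongrightarrow> L) at_top" using assms(4) by auto
  obtain \<delta> where d: "\<delta> > 0" "\<forall>m::nat. f (real m) \<ge> \<delta> * real m"
    using mod_lower[OF mf L] by auto
  show ?thesis
  proof (intro conjI impI)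
    assume W: "wijsman_strongly_cesaro_summable f As A"
    show "f_wijsman_statistically_convergent f As A"
      unfolding f_wijsman_statistically_convergent_def f_density_zero_def
    proof (intro allI impI)
      fix x and \<epsilon> :: real assume ep: "\<epsilon> > 0"
      show "(\<lambda>n. f (real (card {k \<in> {1..n}. k \<in> {k. \<epsilon> \<le> \<bar>infdist x (As k) - infdist x A\<bar>}})) / f (real n)) \<longlonglongrightarrow> 0"
        using part1[OF mf d(1) d(2), of "\<lambda>k. \<bar>infdist x (As k) - infdist x A\<bar>" \<epsilon>] W ep
        unfolding wijsman_strongly_cesaro_summable_def by auto
    qed
  next
    assume H: "wijsman_bounded As \<and> f_wijsman_statistically_convergent f As A"
    show "wijsman_strongly_cesaro_summable f As A"
      unfolding wijsman_strongly_cesaro_summable_def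
    proof
      fix x
      obtain B where B: "\<And>k. infdist x (As k) \<le> B"
        using H unfolding wijsman_bounded_def bdd_above_def by blast
      have Mb: "\<forall>k. \<bar>infdist x (As k) - infdist x A\<bar> \<le> B + infdist x A"
        using B infdist_nonneg[of x A] infdist_nonneg[of x "As _"]
        by (smt (verit))
      show "(\<lambda>n. (\<Sum>k=1..n. f \<bar>infdist x (As k) - infdist x A\<bar>) / real n) \<longlonglongrightarrow> 0"
        using part2[OF mf d(1) d(2), of "\<lambda>k. \<bar>infdist x (As k) - infdist x A\<bar>" "B + infdist x A"] H Mb
        unfolding f_wijsman_statistically_convergent_def f_density_zero_def by auto
    qed
  qed
qed

end
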